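(* Every finite-dimensional associative unital algebra over an algebraically closed field $\Bbbk$ admits a standardly based structure.
   Context: A standardly based structure on an algebra $A$ is a poset $(L,\le)$ together with two-sided ideals $A^{\ge p}$ ($p\in L$) such that $A^{\ge p}\supseteq A^{\ge q}$ whenever $p<q$; setting $A^{>p}$ to be the sum of the ideals $A^{\ge q}$ with $q>p$, one can choose complements $A^{(p)}$ of $A^{>p}$ in $A^{\ge p}$ with $\bigoplus_{p\in L}A^{(p)}=A$; and $A^{\ge p}/A^{>p}\cong W(p)\otimes_\Bbbk W'(p)$ as $A$-bimodules, for some left $A$-module $W(p)$ and right $A$-module $W'(p)$. *)

theory Defs
  imports "HOL-Computational_Algebra.Polynomial"
begin

definition fd_algebra :: "('k::field \<Rightarrow> 'a::ring_1 \<Rightarrow> 'a) \<Rightarrow> bool" where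
  "fd_algebra scale \<longleftrightarrow>
     vector_space scale \<and>
     (\<forall>c x y. scale c (x * y) = scale c x * y \<and> scale c (x * y) = x * scale c y) \<and>
     (\<exists>B. finite B \<and> module.span scale B = UNIV)"

definition poset_on :: "nat set \<Rightarrow> (nat \<Rightarrow> nat \<Rightarrow> bool) \<Rightarrow> bool" where
  "poset_on L le \<longleftrightarrow>
     (\<forall>p\<in>L. le p p) \<and>
     (\<forall>p\<in>L. \<forall>q\<in>L. le p q \<and> le q p \<longrightarrow> p = q) \<and>
     (\<forall>p\<in>L. \<forall>q\<in>L. \<forall>r\<in>L. le p q \<and> le q r \<longrightarrow> le p r)"

definition alg_ideal :: "('k::field \<Rightarrow> 'a::ring_1 \<Rightarrow> 'a) \<Rightarrow> 'a set \<Rightarrow> bool" where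
  "alg_ideal scale J \<longleftrightarrow> module.subspace scale J \<and> (\<forall>a x. x \<in> J \<longrightarrow> a * x \<in> J \<and> x * a \<in> J)"

definition ideal_gt :: "('k::field \<Rightarrow> 'a::ring_1 \<Rightarrow> 'a) \<Rightarrow> nat set \<Rightarrow> (nat \<Rightarrow> nat \<Rightarrow> bool)
    \<Rightarrow> (nat \<Rightarrow> 'a set) \<Rightarrow> nat \<Rightarrow> 'a set" where
  "ideal_gt scale L le I p = module.span scale (\<Union>{I q | q. q \<in> L \<and> le p q \<and> p \<noteq> q})"

definition left_module :: "('k::field \<Rightarrow> 'a::ring_1 \<Rightarrow> 'a) \<Rightarrow> 'a set \<Rightarrow> ('a \<Rightarrow> 'a \<Rightarrow> 'a) \<Rightarrow> bool" where
  "left_module scale W actL \<longleftrightarrow> module.subspace scale W \<and>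
     (\<forall>a w. w \<in> W \<longrightarrow> actL a w \<in> W) \<and>
     (\<forall>a w1 w2. w1 \<in> W \<longrightarrow> w2 \<in> W \<longrightarrow> actL a (w1 + w2) = actL a w1 + actL a w2) \<and>
     (\<forall>a b w. w \<in> W \<longrightarrow> actL (a + b) w = actL a w + actL b w) \<and>
     (\<forall>a b w. w \<in> W \<longrightarrow> actL (a * b) w = actL a (actL b w)) \<and>
     (\<forall>w. w \<in> W \<longrightarrow> actL 1 w = w) \<and>
     (\<forall>c a w. w \<in> W \<longrightarrow> actL (scale c a) w = scale c (actL a w) \<and> actL a (scale c w) = scale c (actL a w))"

definition right_module :: "('k::field \<Rightarrow> 'a::ring_1 \<Rightarrow> 'a) \<Rightarrow> 'a set \<Rightarrow> ('a \<Rightarrow> 'a \<Rightarrow> 'a) \<Rightarrow> bool" where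
  "right_module scale W actR \<longleftrightarrow> module.subspace scale W \<and>
     (\<forall>a w. w \<in> W \<longrightarrow> actR w a \<in> W) \<and>
     (\<forall>a w1 w2. w1 \<in> W \<longrightarrow> w2 \<in> W \<longrightarrow> actR (w1 + w2) a = actR w1 a + actR w2 a) \<and>
     (\<forall>a b w. w \<in> W \<longrightarrow> actR w (a + b) = actR w a + actR w b) \<and>
     (\<forall>a b w. w \<in> W \<longrightarrow> actR w (a * b) = actR (actR w a) b) \<and>
     (\<forall>w. w \<in> W \<longrightarrow> actR w 1 = w) \<and>
     (\<forall>c a w. w \<in> W \<longrightarrow> actR w (scale c a) = scale c (actR w a) \<and> actR (scale c w) a = scale c (actR w a))"

text \<open>The quotient bimodule J/U (U \<subseteq> J ideals) is isomorphic, as an A-bimodule, to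
  W \<otimes>_k W'. This is expressed via a k-bilinear map beta : W \<times> W' \<rightarrow> J (taken modulo U)
  inducing a bimodule isomorphism W \<otimes> W' \<rightarrow> J/U: it is balanced for the actions
  (modulo U), its image spans J modulo U (surjectivity), and it sends products
  B \<times> B' of finite independent sets to a family that is linearly independent modulo U
  (injectivity of the induced map on the tensor product).\<close>
definition quotient_iso_tensor ::
  "('k::field \<Rightarrow> 'a::ring_1 \<Rightarrow> 'a) \<Rightarrow> 'a set \<Rightarrow> 'a set \<Rightarrow> 'a set \<Rightarrow> ('a \<Rightarrow> 'a \<Rightarrow> 'a)
     \<Rightarrow> 'a set \<Rightarrow> ('a \<Rightarrow> 'a \<Rightarrow> 'a) \<Rightarrow> ('a \<Rightarrow> 'a \<Rightarrow> 'a) \<Rightarrow> bool" where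
  "quotient_iso_tensor scale J U W actL W' actR beta \<longleftrightarrow>
     (\<forall>w w'. w \<in> W \<longrightarrow> w' \<in> W' \<longrightarrow> beta w w' \<in> J) \<and>
     (\<forall>w1 w2 w'. w1 \<in> W \<longrightarrow> w2 \<in> W \<longrightarrow> w' \<in> W' \<longrightarrow> beta (w1 + w2) w' = beta w1 w' + beta w2 w') \<and>
     (\<forall>w w1' w2'. w \<in> W \<longrightarrow> w1' \<in> W' \<longrightarrow> w2' \<in> W' \<longrightarrow> beta w (w1' + w2') = beta w w1' + beta w w2') \<and>
     (\<forall>c w w'. w \<in> W \<longrightarrow> w' \<in> W' \<longrightarrow>
        beta (scale c w) w' = scale c (beta w w') \<and> beta w (scale c w') = scale c (beta w w')) \<and>
     (\<forall>a w w'. w \<in> W \<longrightarrow> w' \<in> W' \<longrightarrow>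
        a * beta w w' - beta (actL a w) w' \<in> U \<and> beta w w' * a - beta w (actR w' a) \<in> U) \<and>
     J \<subseteq> module.span scale ((\<lambda>(w, w'). beta w w') ` (W \<times> W') \<union> U) \<and>
     (\<forall>B B' (c :: 'a \<times> 'a \<Rightarrow> 'k). finite B \<longrightarrow> finite B' \<longrightarrow> B \<subseteq> W \<longrightarrow> B' \<subseteq> W' \<longrightarrow>
        \<not> module.dependent scale B \<longrightarrow> \<not> module.dependent scale B' \<longrightarrow>
        (\<Sum>(b, b') \<in> B \<times> B'. scale (c (b, b')) (beta b b')) \<in> U \<longrightarrow>
        (\<forall>x \<in> B \<times> B'. c x = 0))"

text \<open>Standardly based structure with poset (L, le), L a set of natural numbers, and
  ideals I p = A^{\<ge>p}.\<close>
definition standardly_based ::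
  "('k::field \<Rightarrow> 'a::ring_1 \<Rightarrow> 'a) \<Rightarrow> nat set \<Rightarrow> (nat \<Rightarrow> nat \<Rightarrow> bool) \<Rightarrow> (nat \<Rightarrow> 'a set) \<Rightarrow> bool" where
  "standardly_based scale L le I \<longleftrightarrow>
     poset_on L le \<and>
     (\<forall>p\<in>L. alg_ideal scale (I p)) \<and>
     (\<forall>p\<in>L. \<forall>q\<in>L. le p q \<and> p \<noteq> q \<longrightarrow> I q \<subseteq> I p) \<and>
     (\<exists>C :: nat \<Rightarrow> 'a set.
        (\<forall>p\<in>L. module.subspace scale (C p) \<and>
                I p = {u + v | u v. u \<in> C p \<and> v \<in> ideal_gt scale L le I p} \<and>
                C p \<inter> ideal_gt scale L le I p = {0}) \<and>
        module.span scale (\<Union>p\<in>L. C p) = UNIV \<and>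
        (\<forall>F x. finite F \<longrightarrow> F \<subseteq> L \<longrightarrow> (\<forall>p\<in>F. x p \<in> C p) \<longrightarrow> sum x F = 0 \<longrightarrow> (\<forall>p\<in>F. x p = 0))) \<and>
     (\<forall>p\<in>L. \<exists>W actL W' actR beta.
        left_module scale W actL \<and> right_module scale W' actR \<and>
        quotient_iso_tensor scale (I p) (ideal_gt scale L le I p) W actL W' actR beta)"

end

theory Submission
  imports Defs
begin

locale fdalg = finite_dimensional_vector_space scale Basis
  for scale :: "'k::alg_closed_field \<Rightarrow> 'a::ring_1 \<Rightarrow> 'a" and Basis +
  assumes sl: "scale c (x * y) = scale c x * y" and sr: "scale c (x * y) = x * scale c y"
begin

interpretation VP: vector_space_pair scale scale by unfold_locales

lemma proj_exists:
  assumes "subspace U"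
  obtains P where "Vector_Spaces.linear scale scale P" "\<And>x. x - P x \<in> U" "\<And>u. u \<in> U \<Longrightarrow> P u = 0"
proof -
  obtain BU where BU: "BU \<subseteq> U" "independent BU" "U \<subseteq> span BU"
    by (rule basis_exists)
  define R where "R = VP.construct BU (\<lambda>b. b)"
  have linR: "Vector_Spaces.linear scale scale R" unfolding R_def by (rule VP.linear_construct[OF BU(2)])
  have RU: "R x \<in> U" for x
  proof -
    have "R x \<in> span ((\<lambda>b. b) ` BU)" unfolding R_def by (rule VP.construct_in_span[OF BU(2)])
    also have "\<dots> \<subseteq> U" using BU(1) assms by (metis image_ident span_minimal)
    finally show ?thesis .
  qed
  have Rid: "R u = u" if "u \<in> U" for u
  proof -
    have "u \<in> span BU" using that BU(3) by blast
    moreover have "R b = b" if "b \<in> BU" for b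
      unfolding R_def by (rule VP.construct_basis[OF BU(2) that])
    ultimately show "R u = u"
      using VP.linear_eq_on[OF linR linear_ident, of u BU] by simp
  qed
  have "Vector_Spaces.linear scale scale (\<lambda>x. x - R x)"
    by (rule VP.linear_compose_sub[OF linear_ident linR])
  then show ?thesis
  proof (rule that)
    show "x - (x - R x) \<in> U" for x using RU[of x] by simp
    show "u \<in> U \<Longrightarrow> u - R u = 0" for u using Rid[of u] by simp
  qed
qed

lemma scale_one_mult: "scale c 1 * x = scale c x"
  by (metis sl mult_1_left)

lemma mult_scale_one: "x * scale c 1 = scale c x"
  by (metis sr mult_1_right)

definition evalz :: "'a \<Rightarrow> 'k poly \<Rightarrow> 'a" where
  "evalz z p = (\<Sum>i\<le>degree p. scale (coeff p i) (z ^ i))"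

lemma ev_bound: "degree p \<le> N \<Longrightarrow> evalz z p = (\<Sum>i\<le>N. scale (coeff p i) (z ^ i))"
  unfolding evalz_def by (intro sum.mono_neutral_left) (auto simp: coeff_eq_0)

lemma ev_add: "evalz z (p + q) = evalz z p + evalz z q"
proof -
  let ?N = "max (degree p) (degree q)"
  have "evalz z (p + q) = (\<Sum>i\<le>?N. scale (coeff (p + q) i) (z ^ i))"
    by (rule ev_bound) (intro degree_add_le; simp)
  also have "\<dots> = (\<Sum>i\<le>?N. scale (coeff p i) (z ^ i)) + (\<Sum>i\<le>?N. scale (coeff q i) (z ^ i))"
    by (simp add: scale_left_distrib sum.distrib)
  also have "\<dots> = evalz z p + evalz z q"
    using ev_bound[of p ?N z] ev_bound[of q ?N z] by simp
  finally show ?thesis .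
qed

lemma ev_0: "evalz z 0 = 0"
  by (simp add: evalz_def)

lemma ev_diff: "evalz z (p - q) = evalz z p - evalz z q"
  using ev_add[of z "p - q" q] by simp

lemma ev_smult: "evalz z (smult c p) = scale c (evalz z p)"
proof -
  have "evalz z (smult c p) = (\<Sum>i\<le>degree p. scale (coeff (smult c p) i) (z ^ i))"
    by (rule ev_bound) (rule degree_smult_le)
  also have "\<dots> = scale c (evalz z p)"
    by (simp add: evalz_def scale_sum_right)
  finally show ?thesis .
qed

lemma ev_pCons0: "evalz z (pCons 0 q) = evalz z q * z"
proof -
  have "evalz z (pCons 0 q) = (\<Sum>i\<le>Suc (degree q). scale (coeff (pCons 0 q) i) (z ^ i))"
    by (rule ev_bound) (rule degree_pCons_le)
  also have "\<dots> = (\<Sum>i\<le>degree q. scale (coeff q i) (z ^ Suc i))"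
    by (subst sum.atMost_Suc_shift) simp
  also have "\<dots> = (\<Sum>i\<le>degree q. scale (coeff q i) (z ^ i) * z)"
    by (simp only: power_Suc2 sl)
  also have "\<dots> = evalz z q * z"
    by (simp add: evalz_def sum_distrib_right)
  finally show ?thesis .
qed

lemma ev_const: "evalz z [:c:] = scale c 1"
  by (simp add: evalz_def)

lemma ev_monom: "evalz z (monom c k) = scale c (z ^ k)"
proof -
  have "evalz z (monom c k) = (\<Sum>i\<le>k. scale (coeff (monom c k) i) (z ^ i))"
    by (rule ev_bound) (rule degree_monom_le)
  also have "\<dots> = (\<Sum>i\<le>k. if i = k then scale c (z ^ i) else 0)"
    by (intro sum.cong) auto
  also have "\<dots> = scale c (z ^ k)" by simp
  finally show ?thesis .
qed

lemma ev_sum: "evalz z (\<Sum>k\<in>K. f k) = (\<Sum>k\<in>K. evalz z (f k))"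
  by (induct K rule: infinite_finite_induct) (simp_all add: ev_0 ev_add)

lemma ev_linfac: "evalz z (q * [:-r, 1:]) = evalz z q * (z - scale r 1)"
proof -
  have "q * [:-r, 1:] = smult (-r) q + pCons 0 q"
    by (simp add: one_pCons[symmetric])
  then have "evalz z (q * [:-r, 1:]) = evalz z (smult (-r) q) + evalz z (pCons 0 q)"
    by (simp only: ev_add)
  also have "\<dots> = scale (-r) (evalz z q) + evalz z q * z"
    by (simp only: ev_smult ev_pCons0)
  also have "\<dots> = evalz z q * (z - scale r 1)"
    by (simp add: right_diff_distrib mult_scale_one)
  finally show ?thesis .
qed

lemma exists_annihilating_poly: "\<exists>p. p \<noteq> 0 \<and> evalz z p * w0 = 0"
proof -
  define f where "f k = z ^ k * w0" for k
  define N where "N = dimension"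
  show ?thesis
  proof (cases "inj_on f {..N}")
    case False
    then obtain i j where ij: "i \<noteq> j" "f i = f j" unfolding inj_on_def by blast
    define p where "p = monom (1::'k) i - monom 1 j"
    have "coeff p i = 1" using ij by (simp add: p_def)
    then have "p \<noteq> 0" by auto
    moreover have "evalz z p * w0 = 0"
    proof -
      have "evalz z p = z ^ i - z ^ j" by (simp add: p_def ev_diff ev_monom)
      then show ?thesis using ij by (simp add: left_diff_distrib f_def)
    qed
    ultimately show ?thesis by blast
  next
    case True
    have "dependent (f ` {..N})"
    proof (rule ccontr)
      assume ind: "independent (f ` {..N})"
      have "card (f ` {..N}) = Suc N" using True by (simp add: card_image)
      moreover have "card (f ` {..N}) \<le> dim (f ` {..N})"
        using independent_bound_general[OF ind] by simp
      moreover have "dim (f ` {..N}) \<le> N" unfolding N_def by (rule dim_subset_UNIV)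
      ultimately show False by simp
    qed
    then obtain t u where tu: "finite t" "t \<subseteq> f ` {..N}" "(\<Sum>v\<in>t. scale (u v) v) = 0" "\<exists>v\<in>t. u v \<noteq> 0"
      unfolding dependent_explicit by blast
    define K where "K = {k\<in>{..N}. f k \<in> t}"
    have tK: "t = f ` K" using tu(2) unfolding K_def by blast
    have injK: "inj_on f K" using True unfolding K_def by (rule inj_on_subset) auto
    have finK: "finite K" unfolding K_def by simp
    define p where "p = (\<Sum>k\<in>K. monom (u (f k)) k)"
    have "evalz z p * w0 = (\<Sum>k\<in>K. scale (u (f k)) (f k))"
      by (simp add: p_def ev_sum ev_monom sum_distrib_right f_def sl mult.assoc)
    also have "\<dots> = (\<Sum>v\<in>t. scale (u v) v)"
      unfolding tK by (rule sum.reindex[OF injK, symmetric, unfolded comp_def])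
    also have "\<dots> = 0" by (rule tu(3))
    finally have ev0: "evalz z p * w0 = 0" .
    obtain v where v: "v \<in> t" "u v \<noteq> 0" using tu(4) by blast
    then obtain k0 where k0: "k0 \<in> K" "v = f k0" using tK by blast
    have "coeff p k0 = (\<Sum>k\<in>K. if k = k0 then u (f k) else 0)"
      by (simp add: p_def coeff_sum eq_commute)
    also have "\<dots> = u v" using k0 finK by simp
    finally have "p \<noteq> 0" using v by auto
    with ev0 show ?thesis by blast
  qed
qed

lemma schur:
  assumes U: "subspace U" and Uleft: "\<And>a x. x \<in> U \<Longrightarrow> a * x \<in> U"
    and w0U: "w0 \<notin> U"
    and CYC: "\<And>y. y * w0 \<notin> U \<Longrightarrow> \<exists>b. b * (y * w0) - w0 \<in> U"
    and zp: "\<And>a. a * w0 \<in> U \<Longrightarrow> a * (z * w0) \<in> U"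
  shows "\<exists>l. (z - scale l 1) * w0 \<in> U"
proof -
  have main: "\<forall>p. degree p = n \<longrightarrow> p \<noteq> 0 \<longrightarrow> evalz z p * w0 \<in> U \<longrightarrow> (\<exists>l. (z - scale l 1) * w0 \<in> U)" for n
  proof (induction n)
    case 0
    show ?case
    proof (intro allI impI)
      fix p :: "'k poly" assume p: "degree p = 0" "p \<noteq> 0" "evalz z p * w0 \<in> U"
      define c where "c = coeff p 0"
      have pc: "p = [:c:]" unfolding c_def using degree_0_id[OF p(1)] by simp
      with p(2) have c0: "c \<noteq> 0" by auto
      have "scale c w0 \<in> U" using p(3) by (simp add: pc ev_const scale_one_mult)
      then have "scale (inverse c) (scale c w0) \<in> U" using U by (rule subspace_scale[rotated])
      then have "w0 \<in> U" using c0 by simp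
      with w0U show "\<exists>l. (z - scale l 1) * w0 \<in> U" by blast
    qed
  next
    case (Suc m)
    show ?case
    proof (intro allI impI)
      fix p :: "'k poly" assume p: "degree p = Suc m" "p \<noteq> 0" "evalz z p * w0 \<in> U"
      obtain r where "poly p r = 0" using alg_closed_imp_poly_has_root[of p] p(1) by auto
      then obtain q where pq: "p = [:-r, 1:] * q" by (auto simp: poly_eq_0_iff_dvd elim: dvdE)
      have q0: "q \<noteq> 0" using p(2) pq by auto
      have dq: "degree q = m" using p(1) q0 unfolding pq by (subst (asm) degree_mult_eq) auto
      define d where "d = z - scale r 1"
      define y where "y = evalz z q"
      have "evalz z p = y * d" unfolding pq d_def y_def
        by (subst mult.commute) (rule ev_linfac)
      then have ydw: "y * (d * w0) \<in> U"
        using p(3) by (simp add: mult.assoc)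
      have dp: "a * (d * w0) \<in> U" if "a * w0 \<in> U" for a
      proof -
        have "a * (d * w0) = a * (z * w0) - scale r (a * w0)"
          by (simp add: d_def left_diff_distrib right_diff_distrib scale_one_mult sr)
        then show ?thesis using zp[OF that] that U by (simp add: subspace_diff subspace_scale)
      qed
      show "\<exists>l. (z - scale l 1) * w0 \<in> U"
      proof (cases "y * w0 \<in> U")
        case True
        then show ?thesis using Suc.IH dq q0 unfolding y_def by blast
      next
        case False
        then obtain b where b: "b * (y * w0) - w0 \<in> U" using CYC by blast
        have "(b * y - 1) * w0 \<in> U" using b by (simp add: left_diff_distrib mult.assoc)
        then have 1: "(b * y - 1) * (d * w0) \<in> U" by (rule dp)
        have 2: "(b * y) * (d * w0) \<in> U" using Uleft[OF ydw, of b] by (simp add: mult.assoc)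
        have "d * w0 = (b * y) * (d * w0) - (b * y - 1) * (d * w0)"
          by (simp add: left_diff_distrib)
        then have "d * w0 \<in> U" using 1 2 U by (metis subspace_diff)
        then show ?thesis unfolding d_def by blast
      qed
    qed
  qed
  obtain p where p: "p \<noteq> 0" "evalz z p * w0 = 0" using exists_annihilating_poly by blast
  then have "evalz z p * w0 \<in> U" using subspace_0[OF U] by simp
  then show ?thesis using main[of "degree p"] p(1) by blast
qed


definition aideal :: "'a set \<Rightarrow> bool" where
  "aideal X \<longleftrightarrow> subspace X \<and> (\<forall>a x. x \<in> X \<longrightarrow> a * x \<in> X \<and> x * a \<in> X)"

definition lsub :: "'a set \<Rightarrow> bool" where
  "lsub X \<longleftrightarrow> subspace X \<and> (\<forall>a x. x \<in> X \<longrightarrow> a * x \<in> X)"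

lemma subspace_eq_dim:
  assumes "subspace X" "subspace Y" "X \<subseteq> Y" "dim Y \<le> dim X"
  shows "X = Y"
  using dim_eq_span[OF assms(3,4)] assms(1,2) span_eq_iff by metis

context
  fixes U J :: "'a set"
  assumes U: "aideal U" and J: "aideal J" and UJ: "U \<subset> J"
    and Jmax: "\<And>X. aideal X \<Longrightarrow> U \<subseteq> X \<Longrightarrow> X \<subseteq> J \<Longrightarrow> X = U \<or> X = J"
begin

lemma Usub: "subspace U" using U by (simp add: aideal_def)
lemma Uleft: "x \<in> U \<Longrightarrow> a * x \<in> U" using U by (simp add: aideal_def)
lemma Uright: "x \<in> U \<Longrightarrow> x * a \<in> U" using U by (simp add: aideal_def)
lemma Jsub: "subspace J" using J by (simp add: aideal_def)
lemma Jleft: "x \<in> J \<Longrightarrow> a * x \<in> J" using J by (simp add: aideal_def)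
lemma Jright: "x \<in> J \<Longrightarrow> x * a \<in> J" using J by (simp add: aideal_def)

lemma exists_min_lsub:
  obtains S where "lsub S" "U \<subset> S" "S \<subseteq> J" "\<And>X. lsub X \<Longrightarrow> U \<subseteq> X \<Longrightarrow> X \<subseteq> S \<Longrightarrow> X = U \<or> X = S"
proof -
  let ?P = "\<lambda>X. lsub X \<and> U \<subset> X \<and> X \<subseteq> J"
  have "?P J" using J UJ by (auto simp: aideal_def lsub_def)
  then obtain S where S: "?P S" and Smin: "\<And>X. ?P X \<Longrightarrow> dim S \<le> dim X"
    using ex_has_least_nat[of ?P J dim] by blast
  show ?thesis
  proof (rule that)
    show "lsub S" "U \<subset> S" "S \<subseteq> J" using S by auto
    fix X assume X: "lsub X" "U \<subseteq> X" "X \<subseteq> S"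
    show "X = U \<or> X = S"
    proof (cases "X = U")
      case False
      then have "?P X" using X S by auto
      then have "dim S \<le> dim X" by (rule Smin)
      then have "X = S" using X S by (intro subspace_eq_dim) (auto simp: lsub_def)
      then show ?thesis by blast
    qed blast
  qed
qed


context
  fixes S :: "'a set" and w0 :: 'a and P :: "'a \<Rightarrow> 'a"
  assumes S: "lsub S" "U \<subset> S" "S \<subseteq> J"
    and Smin: "\<And>X. lsub X \<Longrightarrow> U \<subseteq> X \<Longrightarrow> X \<subseteq> S \<Longrightarrow> X = U \<or> X = S"
    and w0: "w0 \<in> S" "w0 \<notin> U"
    and Plin: "Vector_Spaces.linear scale scale P"
    and PU1: "\<And>x. x - P x \<in> U" and PU0: "\<And>u. u \<in> U \<Longrightarrow> P u = 0"
begin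

lemma Ssub: "subspace S" using S by (simp add: lsub_def)
lemma Sleft: "x \<in> S \<Longrightarrow> a * x \<in> S" using S by (simp add: lsub_def)

lemma P_add: "P (x + y) = P x + P y" using VP.linear_add[OF Plin] .
lemma P_diff: "P (x - y) = P x - P y" using VP.linear_diff[OF Plin] .
lemma P_scale: "P (scale c x) = scale c (P x)" using VP.linear_scale[OF Plin] .
lemma P_sum: "P (sum f F) = (\<Sum>i\<in>F. P (f i))" using VP.linear_sum[OF Plin] .
lemma P_mod: "P x - x \<in> U" using subspace_neg[OF Usub PU1[of x]] by simp
lemma P_cong: "x - y \<in> U \<Longrightarrow> P x = P y" using PU0[of "x - y"] by (simp add: P_diff)
lemma PP: "P (P x) = P x" using P_cong[OF PU1[of x]] by simp
lemma P_mem: "subspace X \<Longrightarrow> U \<subseteq> X \<Longrightarrow> x \<in> X \<Longrightarrow> P x \<in> X"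
proof -
  assume a: "subspace X" "U \<subseteq> X" "x \<in> X"
  have "x - (x - P x) \<in> X" using subspace_diff[OF a(1) a(3), of "x - P x"] a(2) PU1[of x] by blast
  then show "P x \<in> X" by simp
qed

lemma CYC0:
  assumes y: "y \<in> S" "y \<notin> U" and x: "x \<in> S"
  shows "\<exists>a. x - a * y \<in> U"
proof -
  define X where "X = {a * y + u | a u. u \<in> U}"
  have "lsub X"
    unfolding lsub_def subspace_def
  proof (intro conjI allI ballI impI)
    have 0: "0 = 0 * y + 0" by simp
    show "0 \<in> X" unfolding X_def using subspace_0[OF Usub] 0 by blast
    fix p q assume "p \<in> X" "q \<in> X"
    then obtain a u b v where pq: "p = a * y + u" "q = b * y + v" "u \<in> U" "v \<in> U" unfolding X_def by blast
    have "p + q = (a + b) * y + (u + v)" using pq by (simp add: algebra_simps)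
    moreover have "u + v \<in> U" using pq subspace_add[OF Usub] by blast
    ultimately show "p + q \<in> X" unfolding X_def by blast
  next
    fix c p assume "p \<in> X"
    then obtain a u where pq: "p = a * y + u" "u \<in> U" unfolding X_def by blast
    have "scale c p = scale c a * y + scale c u" using pq by (simp add: scale_right_distrib sl)
    moreover have "scale c u \<in> U" using pq subspace_scale[OF Usub] by blast
    ultimately show "scale c p \<in> X" unfolding X_def by blast
  next
    fix c p assume "p \<in> X"
    then obtain a u where pq: "p = a * y + u" "u \<in> U" unfolding X_def by blast
    have "c * p = (c * a) * y + c * u" using pq by (simp add: distrib_left mult.assoc)
    moreover have "c * u \<in> U" using pq Uleft by blast
    ultimately show "c * p \<in> X" unfolding X_def by blast
  qed
  moreover have "U \<subseteq> X"
  proof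
    fix u assume "u \<in> U"
    moreover have "u = 0 * y + u" by simp
    ultimately show "u \<in> X" unfolding X_def by blast
  qed
  moreover have "X \<subseteq> S"
  proof
    fix x assume "x \<in> X"
    then obtain a u where "x = a * y + u" "u \<in> U" unfolding X_def by blast
    then show "x \<in> S" using Sleft[OF y(1), of a] S(2) subspace_add[OF Ssub] by blast
  qed
  moreover have "y \<in> X"
  proof -
    have "y = 1 * y + 0" by simp
    then show ?thesis unfolding X_def using subspace_0[OF Usub] by blast
  qed
  ultimately have "X = S" using Smin y(2) by blast
  with x obtain a u where "x = a * y + u" "u \<in> U" unfolding X_def by blast
  then show ?thesis by (auto intro!: exI[of _ a])
qed

definition T :: "'a set" where "T = {m \<in> J. \<forall>a. a * w0 \<in> U \<longrightarrow> a * m \<in> U}"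
definition aw :: "'a \<Rightarrow> 'a" where "aw w = (SOME a. w - a * w0 \<in> U)"

lemma aw: "w \<in> S \<Longrightarrow> w - aw w * w0 \<in> U"
  unfolding aw_def using CYC0[OF w0] by (rule someI_ex)

lemma T_kill: "m \<in> T \<Longrightarrow> d * w0 \<in> U \<Longrightarrow> d * m \<in> U"
  unfolding T_def by blast

lemma T_J: "T \<subseteq> J" unfolding T_def by blast

lemma U_T: "U \<subseteq> T" unfolding T_def using S(2) S(3) Uleft by blast

lemma w0_T: "w0 \<in> T" unfolding T_def using w0 S(3) by blast

lemma T_sub: "subspace T"
  unfolding subspace_def
proof (intro conjI ballI allI)
  show "0 \<in> T" using U_T subspace_0[OF Usub] by blast
  fix x y assume "x \<in> T" "y \<in> T"
  then show "x + y \<in> T" unfolding T_def using subspace_add[OF Jsub] subspace_add[OF Usub]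
    by (auto simp: distrib_left)
next
  fix c x assume "x \<in> T"
  then show "scale c x \<in> T" unfolding T_def using subspace_scale[OF Jsub] subspace_scale[OF Usub]
    by (auto simp: sr[symmetric])
qed

lemma T_right: "m \<in> T \<Longrightarrow> m * b \<in> T"
  unfolding T_def using Jright Uright by (auto simp: mult.assoc[symmetric])


definition W :: "'a set" where "W = P ` S"
definition W' :: "'a set" where "W' = P ` T"
definition actL :: "'a \<Rightarrow> 'a \<Rightarrow> 'a" where "actL a w = P (a * w)"
definition actR :: "'a \<Rightarrow> 'a \<Rightarrow> 'a" where "actR w a = P (w * a)"
definition beta :: "'a \<Rightarrow> 'a \<Rightarrow> 'a" where "beta w w' = P (aw w * w')"

lemma US: "U \<subseteq> S" using S(2) by blast
lemma W_S: "W \<subseteq> S" unfolding W_def using P_mem[OF Ssub US] by blast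
lemma W'_T: "W' \<subseteq> T" unfolding W'_def using P_mem[OF T_sub U_T] by blast
lemma PW: "w \<in> W \<Longrightarrow> P w = w" unfolding W_def using PP by blast
lemma PW': "w \<in> W' \<Longrightarrow> P w = w" unfolding W'_def using PP by blast

lemma left_mod: "left_module scale W actL"
  unfolding left_module_def
proof (intro conjI allI impI)
  show "subspace W" unfolding W_def by (rule VP.linear_subspace_image[OF Plin Ssub])
  fix a w assume "w \<in> W"
  then show "actL a w \<in> W" unfolding actL_def W_def using Sleft W_S by (auto simp: W_def)
next
  fix a w1 w2 show "actL a (w1 + w2) = actL a w1 + actL a w2"
    by (simp add: actL_def distrib_left P_add)
next
  fix a b w show "actL (a + b) w = actL a w + actL b w"
    by (simp add: actL_def distrib_right P_add)
next
  fix a b w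
  have "a * b * w - a * P (b * w) \<in> U"
    using Uleft[OF PU1[of "b * w"], of a] by (simp add: right_diff_distrib mult.assoc)
  then show "actL (a * b) w = actL a (actL b w)" unfolding actL_def by (rule P_cong)
next
  fix w assume "w \<in> W"
  then show "actL 1 w = w" by (simp add: actL_def PW)
next
  fix c a w
  show "actL (scale c a) w = scale c (actL a w)"
    by (simp add: actL_def P_scale sl[symmetric])
  show "actL a (scale c w) = scale c (actL a w)"
    by (simp add: actL_def P_scale sr[symmetric])
qed

lemma right_mod: "right_module scale W' actR"
  unfolding right_module_def
proof (intro conjI allI impI)
  show "subspace W'" unfolding W'_def by (rule VP.linear_subspace_image[OF Plin T_sub])
  fix a w assume "w \<in> W'"
  then show "actR w a \<in> W'" unfolding actR_def using T_right W'_T by (auto simp: W'_def)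
next
  fix a w1 w2 show "actR (w1 + w2) a = actR w1 a + actR w2 a"
    by (simp add: actR_def distrib_right P_add)
next
  fix a b w show "actR w (a + b) = actR w a + actR w b"
    by (simp add: actR_def distrib_left P_add)
next
  fix a b w
  have "w * a * b - P (w * a) * b \<in> U"
    using Uright[OF PU1[of "w * a"], of b] by (simp add: left_diff_distrib)
  then show "actR w (a * b) = actR (actR w a) b" unfolding actR_def by (simp add: mult.assoc[symmetric] P_cong)
next
  fix w assume "w \<in> W'"
  then show "actR w 1 = w" by (simp add: actR_def PW')
next
  fix c a w
  show "actR w (scale c a) = scale c (actR w a)"
    by (simp add: actR_def P_scale sr[symmetric])
  show "actR (scale c w) a = scale c (actR w a)"
    by (simp add: actR_def P_scale sl[symmetric])
qed


lemma CYC: "y * w0 \<notin> U \<Longrightarrow> \<exists>b. b * (y * w0) - w0 \<in> U"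
proof -
  assume y: "y * w0 \<notin> U"
  obtain a where "w0 - a * (y * w0) \<in> U" using CYC0[OF Sleft[OF w0(1)] y w0(1)] by blast
  then have "- (w0 - a * (y * w0)) \<in> U" by (rule subspace_neg[OF Usub])
  then show ?thesis by auto
qed

lemma sum_U: "(\<And>i. i \<in> F \<Longrightarrow> f i \<in> U) \<Longrightarrow> sum f F \<in> U"
  by (rule subspace_sum[OF Usub])

lemma U_diff: "x \<in> U \<Longrightarrow> y \<in> U \<Longrightarrow> x - y \<in> U" by (rule subspace_diff[OF Usub])
lemma U_add: "x \<in> U \<Longrightarrow> y \<in> U \<Longrightarrow> x + y \<in> U" by (rule subspace_add[OF Usub])

lemma key:
  assumes "finite M"
  shows "M \<subseteq> T \<Longrightarrow> (\<forall>d. (\<Sum>m\<in>M. scale (d m) m) \<in> U \<longrightarrow> (\<forall>m\<in>M. d m = 0))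
    \<Longrightarrow> (\<Sum>m\<in>M. x m * m) \<in> U \<Longrightarrow> m0 \<in> M \<Longrightarrow> x m0 * w0 \<in> U"
  using assms
proof (induction M arbitrary: x m0 rule: finite_induct)
  case empty then show ?case by simp
next
  case (insert m' M)
  have MT: "M \<subseteq> T" and m'T: "m' \<in> T" using insert.prems(1) by auto
  have indM: "\<forall>d. (\<Sum>m\<in>M. scale (d m) m) \<in> U \<longrightarrow> (\<forall>m\<in>M. d m = 0)"
  proof (intro allI impI ballI)
    fix d m assume dM: "(\<Sum>m\<in>M. scale (d m) m) \<in> U" and m: "m \<in> M"
    define d' where "d' = d(m' := 0)"
    have "(\<Sum>m\<in>insert m' M. scale (d' m) m) = (\<Sum>m\<in>M. scale (d' m) m)"
      using insert.hyps by (simp add: d'_def)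
    also have "\<dots> = (\<Sum>m\<in>M. scale (d m) m)"
      using insert.hyps(2) by (intro sum.cong) (auto simp: d'_def)
    finally have "(\<Sum>m\<in>insert m' M. scale (d' m) m) \<in> U" using dM by simp
    then have "d' m = 0" using insert.prems(2) m by blast
    then show "d m = 0" using m insert.hyps(2) by (auto simp: d'_def split: if_splits)
  qed
  have IH: "x m0 * w0 \<in> U" if "(\<Sum>m\<in>M. x m * m) \<in> U" "m0 \<in> M" for x m0
    using insert.IH[OF MT indM that] .
  have sum_ins: "(\<Sum>m\<in>insert m' M. f m) = f m' + (\<Sum>m\<in>M. f m)" for f :: "'a \<Rightarrow> 'a"
    using insert.hyps by simp
  show ?case
  proof (cases "x m' * w0 \<in> U")
    case True
    then have 1: "x m' * m' \<in> U" using T_kill[OF m'T] by blast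
    have "(\<Sum>m\<in>M. x m * m) = (\<Sum>m\<in>insert m' M. x m * m) - x m' * m'" by (simp add: sum_ins)
    then have "(\<Sum>m\<in>M. x m * m) \<in> U" using U_diff[OF insert.prems(3) 1] by simp
    then show ?thesis using True IH insert.prems(4) by blast
  next
    case False
    obtain b where b: "b * (x m' * w0) - w0 \<in> U" using CYC[OF False] by blast
    define z where "z m = b * x m" for m
    have ins_z: "(\<Sum>m\<in>insert m' M. (c * z m) * m) \<in> U" for c
    proof -
      have "(\<Sum>m\<in>insert m' M. (c * z m) * m) = (c * b) * (\<Sum>m\<in>insert m' M. x m * m)"
        by (simp add: z_def sum_distrib_left mult.assoc)
      then show ?thesis using Uleft[OF insert.prems(3)] by simp
    qed
    have zp: "a * (z m * w0) \<in> U" if m: "m \<in> M" and a: "a * w0 \<in> U" for m a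
    proof -
      have "(a * z m') * w0 = a * (b * (x m' * w0) - w0) + a * w0"
        by (simp add: z_def right_diff_distrib mult.assoc)
      then have "(a * z m') * w0 \<in> U" using U_add[OF Uleft[OF b] a] by simp
      then have 1: "(a * z m') * m' \<in> U" using T_kill[OF m'T] by blast
      have "(\<Sum>m\<in>M. (a * z m) * m) = (\<Sum>m\<in>insert m' M. (a * z m) * m) - (a * z m') * m'"
        by (simp add: sum_ins)
      then have "(\<Sum>m\<in>M. (a * z m) * m) \<in> U" using U_diff[OF ins_z 1] by simp
      then have "(a * z m) * w0 \<in> U" using IH[of "\<lambda>m. a * z m"] m by blast
      then show ?thesis by (simp add: mult.assoc)
    qed
    have "\<forall>m\<in>M. \<exists>l. (z m - scale l 1) * w0 \<in> U"
      using schur[OF Usub Uleft w0(2) CYC zp] by blast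
    then obtain lam where lam: "\<And>m. m \<in> M \<Longrightarrow> (z m - scale (lam m) 1) * w0 \<in> U" by metis
    define d where "d m = (if m = m' then 1 else lam m)" for m
    have A: "(\<Sum>m\<in>insert m' M. z m * m) \<in> U" using ins_z[of 1] by simp
    have B: "(\<Sum>m\<in>insert m' M. z m * m - scale (d m) m) \<in> U"
    proof (rule sum_U)
      fix m assume m: "m \<in> insert m' M"
      show "z m * m - scale (d m) m \<in> U"
      proof (cases "m = m'")
        case True
        have "(z m' - 1) * w0 \<in> U" using b by (simp add: z_def left_diff_distrib mult.assoc)
        then have "(z m' - 1) * m' \<in> U" using T_kill[OF m'T] by blast
        then show ?thesis using True by (simp add: d_def left_diff_distrib)
      next
        case False
        then have mM: "m \<in> M" using m by simp
        have "m \<in> T" using mM MT by blast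
        then have "(z m - scale (lam m) 1) * m \<in> U" using T_kill lam[OF mM] by blast
        then show ?thesis using False by (simp add: d_def left_diff_distrib scale_one_mult)
      qed
    qed
    have "(\<Sum>m\<in>insert m' M. scale (d m) m) = (\<Sum>m\<in>insert m' M. z m * m) - (\<Sum>m\<in>insert m' M. z m * m - scale (d m) m)"
      by (simp add: sum_subtractf)
    then have "(\<Sum>m\<in>insert m' M. scale (d m) m) \<in> U" using U_diff[OF A B] by simp
    then have "d m' = 0" using insert.prems(2) by blast
    then show ?thesis by (simp add: d_def)
  qed
qed


lemma indep_modU:
  assumes "finite X" "independent X" "\<And>x. x \<in> X \<Longrightarrow> P x = x"
    and "(\<Sum>m\<in>X. scale (d m) m) \<in> U" and "m \<in> X"
  shows "d m = 0"
proof -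
  have "P (\<Sum>m\<in>X. scale (d m) m) = (\<Sum>m\<in>X. scale (d m) m)"
    using assms(3) by (simp add: P_sum P_scale)
  moreover have "P (\<Sum>m\<in>X. scale (d m) m) = 0" using PU0[OF assms(4)] .
  ultimately have "(\<Sum>m\<in>X. scale (d m) m) = 0" by simp
  then show ?thesis using assms(1,2,5) unfolding independent_explicit_finite_subsets by blast
qed

lemma e_U: "w \<in> W \<Longrightarrow> w - aw w * w0 \<in> U" using aw W_S by blast

lemma balL:
  assumes w: "w \<in> W" and w': "w' \<in> W'"
  shows "a * beta w w' - beta (actL a w) w' \<in> U"
proof -
  have aw_W: "actL a w \<in> W" using left_mod w by (simp add: left_module_def)
  define D where "D = a * aw w - aw (P (a * w))"
  have "D * w0 = - (a * (w - aw w * w0)) + (a * w - P (a * w)) + (P (a * w) - aw (P (a * w)) * w0)"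
    by (simp add: D_def algebra_simps)
  also have "\<dots> \<in> U"
    using U_add[OF U_add[OF subspace_neg[OF Usub Uleft[OF e_U[OF w], of a]] PU1[of "a * w"]] e_U[OF aw_W[unfolded actL_def]]] .
  finally have DU: "D * w' \<in> U" using T_kill W'_T w' by blast
  have "a * beta w w' - beta (actL a w) w' =
      a * (P (aw w * w') - aw w * w') + D * w' + (aw (P (a * w)) * w' - P (aw (P (a * w)) * w'))"
    by (simp add: beta_def actL_def D_def algebra_simps)
  also have "\<dots> \<in> U"
    using U_add[OF U_add[OF Uleft[OF P_mod[of "aw w * w'"], of a] DU] PU1[of "aw (P (a * w)) * w'"]] .
  finally show ?thesis .
qed

lemma balR:
  assumes w: "w \<in> W" and w': "w' \<in> W'"
  shows "beta w w' * a - beta w (actR w' a) \<in> U"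
proof -
  have "beta w w' * a - beta w (actR w' a) =
      (P (aw w * w') - aw w * w') * a + aw w * (w' * a - P (w' * a)) + (aw w * P (w' * a) - P (aw w * P (w' * a)))"
    by (simp add: beta_def actR_def algebra_simps)
  also have "\<dots> \<in> U"
    using U_add[OF U_add[OF Uright[OF P_mod[of "aw w * w'"], of a] Uleft[OF PU1[of "w' * a"], of "aw w"]] PU1[of "aw w * P (w' * a)"]] .
  finally show ?thesis .
qed

lemma qit: "quotient_iso_tensor scale J U W actL W' actR beta"
  unfolding quotient_iso_tensor_def
proof (intro conjI allI impI)
  fix w w' assume w: "w \<in> W" and w': "w' \<in> W'"
  have "aw w * w' \<in> J" using Jleft W'_T T_J w' by blast
  then show "beta w w' \<in> J" unfolding beta_def using P_mem[OF Jsub] UJ by blast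
next
  fix w1 w2 w' assume w1: "w1 \<in> W" and w2: "w2 \<in> W" and w': "w' \<in> W'"
  have w12: "w1 + w2 \<in> W" using w1 w2 left_mod by (simp add: left_module_def subspace_add)
  have "(aw (w1 + w2) - aw w1 - aw w2) * w0 = (w1 - aw w1 * w0) + (w2 - aw w2 * w0) - ((w1 + w2) - aw (w1 + w2) * w0)"
    by (simp add: algebra_simps)
  also have "\<dots> \<in> U" using U_diff[OF U_add[OF e_U[OF w1] e_U[OF w2]] e_U[OF w12]] .
  finally have "(aw (w1 + w2) - aw w1 - aw w2) * w' \<in> U" using T_kill W'_T w' by blast
  then have "P (aw (w1 + w2) * w') = P (aw w1 * w' + aw w2 * w')"
    by (intro P_cong) (simp add: algebra_simps)
  then show "beta (w1 + w2) w' = beta w1 w' + beta w2 w'" by (simp add: beta_def P_add)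
next
  fix w w1' w2' show "beta w (w1' + w2') = beta w w1' + beta w w2'"
    by (simp add: beta_def distrib_left P_add)
next
  fix c w w' assume w: "w \<in> W" and w': "w' \<in> W'"
  have cw: "scale c w \<in> W" using w left_mod by (simp add: left_module_def subspace_scale)
  have "(aw (scale c w) - scale c (aw w)) * w0 = scale c (w - aw w * w0) - (scale c w - aw (scale c w) * w0)"
    by (simp add: scale_right_diff_distrib sl left_diff_distrib)
  also have "\<dots> \<in> U" using U_diff[OF subspace_scale[OF Usub e_U[OF w]] e_U[OF cw]] .
  finally have "(aw (scale c w) - scale c (aw w)) * w' \<in> U" using T_kill W'_T w' by blast
  then have "P (aw (scale c w) * w') = P (scale c (aw w) * w')"
    by (intro P_cong) (simp add: left_diff_distrib)
  then show "beta (scale c w) w' = scale c (beta w w')" by (simp add: beta_def P_scale sl[symmetric])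
  show "beta w (scale c w') = scale c (beta w w')" by (simp add: beta_def P_scale sr[symmetric])
next
  fix a w w' assume "w \<in> W" "w' \<in> W'"
  then show "a * beta w w' - beta (actL a w) w' \<in> U" "beta w w' * a - beta w (actR w' a) \<in> U"
    by (rule balL, rule balR)
next

  define N where "N = span ((\<lambda>(w, w'). beta w w') ` (W \<times> W') \<union> U)"
  have bJ: "beta w w' \<in> J" if "w \<in> W" "w' \<in> W'" for w w'
  proof -
    have "aw w * w' \<in> J" using Jleft W'_T T_J that(2) by blast
    then show ?thesis unfolding beta_def using P_mem[OF Jsub] UJ by blast
  qed
  have NJ: "N \<subseteq> J" unfolding N_def using bJ UJ by (intro span_minimal Jsub) auto
  have UN: "U \<subseteq> N" unfolding N_def by (meson le_supE span_superset)
  have gen: "(\<lambda>(w, w'). beta w w') ` (W \<times> W') \<union> U \<subseteq> N" unfolding N_def by (rule span_superset)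
  have bN: "beta w w' \<in> N" if "w \<in> W" "w' \<in> W'" for w w' using gen that by blast
  have Nleft: "a * x \<in> N" if "x \<in> N" for a x
  proof -
    have "subspace {x. a * x \<in> N}"
      unfolding subspace_def N_def
      by (auto simp: span_add span_scale span_zero distrib_left sr[symmetric])
    moreover have "(\<lambda>(w, w'). beta w w') ` (W \<times> W') \<union> U \<subseteq> {x. a * x \<in> N}"
    proof
      fix g assume "g \<in> (\<lambda>(w, w'). beta w w') ` (W \<times> W') \<union> U"
      then show "g \<in> {x. a * x \<in> N}"
      proof
        assume "g \<in> U" then show ?thesis using UN Uleft by blast
      next
        assume "g \<in> (\<lambda>(w, w'). beta w w') ` (W \<times> W')"
        then obtain w w' where ww: "w \<in> W" "w' \<in> W'" "g = beta w w'" by auto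
        have "actL a w \<in> W" using left_mod ww(1) by (simp add: left_module_def)
        then have "beta (actL a w) w' \<in> N" using bN ww(2) by blast
        moreover have "a * beta w w' - beta (actL a w) w' \<in> N" using balL[OF ww(1,2)] UN by blast
        ultimately have "(a * beta w w' - beta (actL a w) w') + beta (actL a w) w' \<in> N"
          unfolding N_def by (rule span_add[rotated])
        then show ?thesis using ww by simp
      qed
    qed
    ultimately have "N \<subseteq> {x. a * x \<in> N}" unfolding N_def[of] by (intro span_minimal) (simp_all add: N_def[symmetric])
    then show ?thesis using that by blast
  qed
  have Nright: "x * a \<in> N" if "x \<in> N" for a x
  proof -
    have "subspace {x. x * a \<in> N}"
      unfolding subspace_def N_def
      by (auto simp: span_add span_scale span_zero distrib_right sl[symmetric])
    moreover have "(\<lambda>(w, w'). beta w w') ` (W \<times> W') \<union> U \<subseteq> {x. x * a \<in> N}"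
    proof
      fix g assume "g \<in> (\<lambda>(w, w'). beta w w') ` (W \<times> W') \<union> U"
      then show "g \<in> {x. x * a \<in> N}"
      proof
        assume "g \<in> U" then show ?thesis using UN Uright by blast
      next
        assume "g \<in> (\<lambda>(w, w'). beta w w') ` (W \<times> W')"
        then obtain w w' where ww: "w \<in> W" "w' \<in> W'" "g = beta w w'" by auto
        have "actR w' a \<in> W'" using right_mod ww(2) by (simp add: right_module_def)
        then have "beta w (actR w' a) \<in> N" using bN ww(1) by blast
        moreover have "beta w w' * a - beta w (actR w' a) \<in> N" using balR[OF ww(1,2)] UN by blast
        ultimately have "(beta w w' * a - beta w (actR w' a)) + beta w (actR w' a) \<in> N"
          unfolding N_def by (rule span_add[rotated])
        then show ?thesis using ww by simp
      qed
    qed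
    ultimately have "N \<subseteq> {x. x * a \<in> N}" unfolding N_def[of] by (intro span_minimal) (simp_all add: N_def[symmetric])
    then show ?thesis using that by blast
  qed
  have aN: "aideal N" unfolding aideal_def N_def using Nleft Nright by (simp add: N_def)
  define v where "v = P w0"
  have vW: "v \<in> W" unfolding v_def W_def using w0(1) by blast
  have vW': "v \<in> W'" unfolding v_def W'_def using w0_T by blast
  have "beta v v \<notin> U"
  proof
    assume "beta v v \<in> U"
    then have 1: "aw v * v \<in> U" using U_add[OF PU1[of "aw v * v"], of "P (aw v * v)"] by (simp add: beta_def)
    have 2: "aw v * (v - w0) \<in> U" using Uleft[OF P_mod[of w0]] by (simp add: v_def)
    have 3: "v - aw v * w0 \<in> U" using e_U[OF vW] .
    have 4: "v - w0 \<in> U" using P_mod[of w0] by (simp add: v_def)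
    have "w0 = aw v * v - aw v * (v - w0) + (v - aw v * w0) - (v - w0)"
      by (simp add: algebra_simps)
    also have "\<dots> \<in> U" using U_diff[OF U_add[OF U_diff[OF 1 2] 3] 4] .
    finally show False using w0(2) by blast
  qed
  moreover have "beta v v \<in> N" using bN vW vW' by blast
  ultimately have "N \<noteq> U" by blast
  then have "N = J" using Jmax[OF aN UN NJ] by blast
  then show "J \<subseteq> span ((\<lambda>(w, w'). beta w w') ` (W \<times> W') \<union> U)" unfolding N_def by simp

next
  fix B B' and c :: "'a \<times> 'a \<Rightarrow> 'k"
  assume fB: "finite B" and fB': "finite B'" and BW: "B \<subseteq> W" and BW': "B' \<subseteq> W'"
    and iB: "\<not> dependent B" and iB': "\<not> dependent B'"
    and H: "(\<Sum>(b, b')\<in>B \<times> B'. scale (c (b, b')) (beta b b')) \<in> U"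
  define x where "x b' = (\<Sum>b\<in>B. scale (c (b, b')) (aw b))" for b'
  define Y where "Y = (\<Sum>(b, b')\<in>B \<times> B'. scale (c (b, b')) (aw b * b'))"
  have "(\<Sum>(b, b')\<in>B \<times> B'. scale (c (b, b')) (beta b b')) = P Y"
    by (simp add: Y_def P_sum P_scale beta_def split_def)
  then have "P Y \<in> U" using H by simp
  then have YU: "Y \<in> U" using U_add[OF PU1[of Y], of "P Y"] by simp
  have "Y = (\<Sum>b\<in>B. \<Sum>b'\<in>B'. scale (c (b, b')) (aw b * b'))"
    unfolding Y_def by (simp add: sum.cartesian_product)
  also have "\<dots> = (\<Sum>b'\<in>B'. \<Sum>b\<in>B. scale (c (b, b')) (aw b * b'))"
    by (rule sum.swap)
  also have "\<dots> = (\<Sum>b'\<in>B'. x b' * b')"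
    by (simp add: x_def sum_distrib_right sl)
  finally have xU: "(\<Sum>b'\<in>B'. x b' * b') \<in> U" using YU by simp
  have indB': "\<forall>d. (\<Sum>m\<in>B'. scale (d m) m) \<in> U \<longrightarrow> (\<forall>m\<in>B'. d m = 0)"
    using indep_modU[OF fB' iB'] PW' BW' by blast
  show "\<forall>p\<in>B \<times> B'. c p = 0"
  proof
    fix p assume p: "p \<in> B \<times> B'"
    then obtain b0 b' where p': "p = (b0, b')" "b0 \<in> B" "b' \<in> B'" by blast
    have "x b' * w0 \<in> U"
      using key[OF fB' _ indB' xU p'(3)] BW' W'_T by blast
    moreover have "x b' * w0 = (\<Sum>b\<in>B. scale (c (b, b')) (aw b * w0))"
      by (simp add: x_def sum_distrib_right sl)
    ultimately have 1: "(\<Sum>b\<in>B. scale (c (b, b')) (aw b * w0)) \<in> U" by simp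
    have 2: "(\<Sum>b\<in>B. scale (c (b, b')) (b - aw b * w0)) \<in> U"
      using e_U BW by (intro sum_U subspace_scale[OF Usub]) blast
    have "(\<Sum>b\<in>B. scale (c (b, b')) b) = (\<Sum>b\<in>B. scale (c (b, b')) (aw b * w0)) + (\<Sum>b\<in>B. scale (c (b, b')) (b - aw b * w0))"
      by (simp add: sum.distrib[symmetric] scale_right_diff_distrib)
    then have "(\<Sum>b\<in>B. scale (c (b, b')) b) \<in> U" using U_add[OF 1 2] by simp
    then have "c (b0, b') = 0"
      using indep_modU[OF fB iB, of "\<lambda>b. c (b, b')" b0] PW BW p'(2) by blast
    then show "c p = 0" using p' by simp
  qed
qed

end


lemma quot_exists:
  "\<exists>W actL W' actR beta. left_module scale W actL \<and> right_module scale W' actR \<and>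
     quotient_iso_tensor scale J U W actL W' actR beta"
proof (rule exists_min_lsub)
  fix S assume S: "lsub S" "U \<subset> S" "S \<subseteq> J"
    and Smin: "\<And>X. lsub X \<Longrightarrow> U \<subseteq> X \<Longrightarrow> X \<subseteq> S \<Longrightarrow> X = U \<or> X = S"
  obtain w0 where w0: "w0 \<in> S" "w0 \<notin> U" using S(2) by blast
  show ?thesis
  proof (rule proj_exists[OF Usub])
    fix P assume P: "Vector_Spaces.linear scale scale P" "\<And>x. x - P x \<in> U" "\<And>u. u \<in> U \<Longrightarrow> P u = 0"
    show ?thesis
      using left_mod[OF S Smin w0 P] right_mod[OF S Smin w0 P] qit[OF S Smin w0 P] by blast
  qed
qed

end

lemma aideal_0: "aideal {0}" by (simp add: aideal_def)
lemma aideal_UNIV: "aideal UNIV" by (simp add: aideal_def)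

lemma chain_exists:
  "aideal J \<Longrightarrow> \<exists>n I. I 0 = J \<and> I n = {0} \<and> (\<forall>k\<le>n. aideal (I k)) \<and>
     (\<forall>k<n. I (Suc k) \<subset> I k \<and> (\<forall>X. aideal X \<longrightarrow> I (Suc k) \<subseteq> X \<longrightarrow> X \<subseteq> I k \<longrightarrow> X = I (Suc k) \<or> X = I k))"
proof (induction "dim J" arbitrary: J rule: less_induct)
  case less
  show ?case
  proof (cases "J = {0}")
    case True
    then show ?thesis by (intro exI[of _ 0] exI[of _ "\<lambda>_. J"]) (simp add: less.prems aideal_0)
  next
    case False
    have Jsub: "subspace J" using less.prems by (simp add: aideal_def)
    let ?P = "\<lambda>X. aideal X \<and> X \<subset> J"
    have p0: "?P {0}" using False subspace_0[OF Jsub] aideal_0 by blast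
    have bd: "\<forall>X. ?P X \<longrightarrow> dim X < Suc dimension" using dim_subset_UNIV by (simp add: less_Suc_eq_le)
    have "\<exists>x. ?P x \<and> (\<forall>y. ?P y \<longrightarrow> dim y \<le> dim x)" by (rule ex_has_greatest_nat[OF p0 bd])
    then obtain J' where J': "?P J'" and J'max0: "\<forall>y. ?P y \<longrightarrow> dim y \<le> dim J'"
      by blast
    have J'max: "dim X \<le> dim J'" if "?P X" for X using J'max0 that by blast
    have J'sub: "subspace J'" using J' by (simp add: aideal_def)
    have e: "span J' = J'" "span J = J" using J'sub Jsub span_eq_iff by blast+
    have "span J' \<subset> span J" unfolding e using J' by blast
    then have dlt: "dim J' < dim J" by (rule dim_psubset)
    have "\<exists>n I. I 0 = J' \<and> I n = {0} \<and> (\<forall>k\<le>n. aideal (I k)) \<and>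
     (\<forall>k<n. I (Suc k) \<subset> I k \<and> (\<forall>X. aideal X \<longrightarrow> I (Suc k) \<subseteq> X \<longrightarrow> X \<subseteq> I k \<longrightarrow> X = I (Suc k) \<or> X = I k))"
      by (rule less.hyps[OF dlt conjunct1[OF J']])
    then obtain n I where I: "I 0 = J'" "I n = {0}" "\<forall>k\<le>n. aideal (I k)"
      "\<forall>k<n. I (Suc k) \<subset> I k \<and> (\<forall>X. aideal X \<longrightarrow> I (Suc k) \<subseteq> X \<longrightarrow> X \<subseteq> I k \<longrightarrow> X = I (Suc k) \<or> X = I k)"
      by (elim exE conjE) (rule that)
    have J'm: "X = J' \<or> X = J" if "aideal X" "J' \<subseteq> X" "X \<subseteq> J" for X
    proof (cases "X = J")
      case False
      then have "?P X" using that by blast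
      then have "dim X \<le> dim J'" by (rule J'max)
      then have "J' = X" using that J'sub by (intro subspace_eq_dim) (auto simp: aideal_def)
      then show ?thesis by blast
    qed blast
    define I' where "I' k = (if k = 0 then J else I (k - 1))" for k
    show ?thesis
    proof (intro exI[of _ "Suc n"] exI[of _ I'] conjI allI impI)
      show "I' 0 = J" by (simp add: I'_def)
      show "I' (Suc n) = {0}" using I(2) by (simp add: I'_def)
      fix k assume "k \<le> Suc n" then show "aideal (I' k)" using I(3) less.prems by (cases k) (auto simp: I'_def)
    next
      fix k assume k: "k < Suc n"
      show "I' (Suc k) \<subset> I' k" using I(1,4) J' k by (cases k) (auto simp: I'_def)
    next
      fix k X assume k: "k < Suc n" and X: "aideal X" "I' (Suc k) \<subseteq> X" "X \<subseteq> I' k"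
      show "X = I' (Suc k) \<or> X = I' k"
      proof (cases k)
        case 0 then show ?thesis using J'm[of X] X I(1) by (simp add: I'_def)
      next
        case (Suc k') then show ?thesis using I(4) k X by (simp add: I'_def)
      qed
    qed
  qed
qed


lemma main: "\<exists>(L :: nat set) le I. standardly_based scale L le I"
proof -
  obtain n I where I0: "I 0 = UNIV" and In: "I n = {0}" and Iid: "\<forall>k\<le>n. aideal (I k)"
    and Istep: "\<forall>k<n. I (Suc k) \<subset> I k \<and> (\<forall>X. aideal X \<longrightarrow> I (Suc k) \<subseteq> X \<longrightarrow> X \<subseteq> I k \<longrightarrow> X = I (Suc k) \<or> X = I k)"
    using chain_exists[OF aideal_UNIV] by (elim exE conjE) (rule that)
  define L where "L = {..<n}"
  have Isub: "subspace (I k)" if "k \<le> n" for k using Iid that by (simp add: aideal_def)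
  have mono: "I j \<subseteq> I k" if "k \<le> j" "j \<le> n" for k j
    using that
  proof (induction j rule: dec_induct)
    case base then show ?case by simp
  next
    case (step j) then show ?case using Istep by (meson Suc_le_lessD dual_order.trans less_imp_le psubset_imp_subset)
  qed
  have gt: "ideal_gt scale L (\<le>) I p = I (Suc p)" if p: "p < n" for p
  proof -
    let ?G = "\<Union>{I q | q. q \<in> L \<and> p \<le> q \<and> p \<noteq> q}"
    have "?G \<subseteq> I (Suc p)"
    proof
      fix x assume "x \<in> ?G"
      then obtain q where q: "x \<in> I q" "q < n" "p < q" unfolding L_def by auto
      then show "x \<in> I (Suc p)" using mono[of "Suc p" q] by auto
    qed
    then have "span ?G \<subseteq> I (Suc p)" using Isub p by (intro span_minimal) auto
    moreover have "I (Suc p) \<subseteq> span ?G"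
    proof (cases "Suc p < n")
      case True
      then have "I (Suc p) \<in> {I q | q. q \<in> L \<and> p \<le> q \<and> p \<noteq> q}" unfolding L_def by auto
      then have "I (Suc p) \<subseteq> ?G" by (rule Union_upper)
      then show ?thesis using span_superset[of ?G] by (rule order_trans)
    next
      case False
      then have "Suc p = n" using p by simp
      then show ?thesis using In span_zero by auto
    qed
    ultimately have "span ?G = I (Suc p)" by (rule subset_antisym)
    then show ?thesis unfolding ideal_gt_def .
  qed
  have "\<forall>p. \<exists>Q. p < n \<longrightarrow> (Vector_Spaces.linear scale scale Q \<and> (\<forall>x. x - Q x \<in> I (Suc p)) \<and> (\<forall>u\<in>I (Suc p). Q u = 0))"
  proof
    fix p show "\<exists>Q. p < n \<longrightarrow> (Vector_Spaces.linear scale scale Q \<and> (\<forall>x. x - Q x \<in> I (Suc p)) \<and> (\<forall>u\<in>I (Suc p). Q u = 0))"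
    proof (cases "p < n")
      case True
      show ?thesis
      proof (rule proj_exists[OF Isub[of "Suc p"]])
        show "Suc p \<le> n" using True by simp
        fix Q assume "Vector_Spaces.linear scale scale Q" "\<And>x. x - Q x \<in> I (Suc p)" "\<And>u. u \<in> I (Suc p) \<Longrightarrow> Q u = 0"
        then show ?thesis by blast
      qed
    qed simp
  qed
  then obtain Q where Q: "\<And>p. p < n \<Longrightarrow> Vector_Spaces.linear scale scale (Q p)"
    "\<And>p x. p < n \<Longrightarrow> x - Q p x \<in> I (Suc p)" "\<And>p u. p < n \<Longrightarrow> u \<in> I (Suc p) \<Longrightarrow> Q p u = 0"
    by metis
  define C where "C p = Q p ` I p" for p
  have C_sub: "subspace (C p)" if "p < n" for p
    unfolding C_def using that by (intro VP.linear_subspace_image[OF Q(1)] Isub) auto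
  have C_I: "C p \<subseteq> I p" if p: "p < n" for p
  proof
    fix y assume "y \<in> C p"
    then obtain x where x: "x \<in> I p" "y = Q p x" unfolding C_def by blast
    have "x - (x - Q p x) \<in> I p"
      using subspace_diff[OF Isub[of p] x(1), of "x - Q p x"] Q(2)[OF p, of x] mono[of p "Suc p"] p by auto
    then show "y \<in> I p" using x by simp
  qed
  have QQ: "Q p (Q p x) = Q p x" if p: "p < n" for p x
  proof -
    have "Q p (x - Q p x) = 0" using Q(3)[OF p Q(2)[OF p]] .
    then show ?thesis using VP.linear_diff[OF Q(1)[OF p]] by simp
  qed
  have C_dec: "I p = {u + v | u v. u \<in> C p \<and> v \<in> ideal_gt scale L (\<le>) I p}"
    and C_int: "C p \<inter> ideal_gt scale L (\<le>) I p = {0}" if p: "p < n" for p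
  proof -
    show "I p = {u + v | u v. u \<in> C p \<and> v \<in> ideal_gt scale L (\<le>) I p}"
    proof
      show "I p \<subseteq> {u + v | u v. u \<in> C p \<and> v \<in> ideal_gt scale L (\<le>) I p}"
      proof
        fix x assume x: "x \<in> I p"
        have "x = Q p x + (x - Q p x)" by simp
        moreover have "Q p x \<in> C p" using x unfolding C_def by blast
        moreover have "x - Q p x \<in> ideal_gt scale L (\<le>) I p" using gt[OF p] Q(2)[OF p] by simp
        ultimately show "x \<in> {u + v | u v. u \<in> C p \<and> v \<in> ideal_gt scale L (\<le>) I p}" by blast
      qed
      show "{u + v | u v. u \<in> C p \<and> v \<in> ideal_gt scale L (\<le>) I p} \<subseteq> I p"
      proof
        fix y assume "y \<in> {u + v | u v. u \<in> C p \<and> v \<in> ideal_gt scale L (\<le>) I p}"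
        then obtain u v where uv: "y = u + v" "u \<in> C p" "v \<in> I (Suc p)" using gt[OF p] by auto
        have "u \<in> I p" using uv C_I[OF p] by blast
        moreover have "v \<in> I p" using uv mono[of p "Suc p"] p by auto
        ultimately show "y \<in> I p" using uv subspace_add[OF Isub[of p]] p by auto
      qed
    qed
    show "C p \<inter> ideal_gt scale L (\<le>) I p = {0}"
    proof
      show "C p \<inter> ideal_gt scale L (\<le>) I p \<subseteq> {0}"
      proof
        fix y assume "y \<in> C p \<inter> ideal_gt scale L (\<le>) I p"
        then obtain x where x: "y = Q p x" "y \<in> I (Suc p)" using gt[OF p] unfolding C_def by auto
        have "Q p y = 0" using Q(3)[OF p x(2)] .
        moreover have "Q p y = y" using QQ[OF p] x(1) by simp
        ultimately show "y \<in> {0}" by simp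
      qed
      have "0 \<in> C p" using C_sub[OF p] subspace_0 by blast
      moreover have "0 \<in> ideal_gt scale L (\<le>) I p" using gt[OF p] subspace_0[OF Isub[of "Suc p"]] p by simp
      ultimately show "{0} \<subseteq> C p \<inter> ideal_gt scale L (\<le>) I p" by blast
    qed
  qed
  have span_down: "I k \<subseteq> span (\<Union>p\<in>{k..<n}. C p)" if "k \<le> n" for k
    using that
  proof (induction k rule: inc_induct)
    case base then show ?case using In span_zero by auto
  next
    case (step k)
    show ?case
    proof
      fix x assume x: "x \<in> I k"
      then obtain u v where uv: "x = u + v" "u \<in> C k" "v \<in> I (Suc k)"
        using C_dec[OF step(2)] gt[OF step(2)] by auto
      have "u \<in> span (\<Union>p\<in>{k..<n}. C p)" using uv(2) step(2) by (intro span_base) auto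
      moreover have "v \<in> span (\<Union>p\<in>{k..<n}. C p)"
      proof -
        have sub: "(\<Union>p\<in>{Suc k..<n}. C p) \<subseteq> (\<Union>p\<in>{k..<n}. C p)"
          by (intro UN_mono) auto
        show ?thesis using step.IH uv(3) span_mono[OF sub] by blast
      qed
      ultimately show "x \<in> span (\<Union>p\<in>{k..<n}. C p)" using uv(1) span_add by simp
    qed
  qed
  have span_all: "span (\<Union>p\<in>L. C p) = UNIV"
    using span_down[of 0] I0 by (auto simp: L_def atLeast0LessThan)
  have indep: "\<forall>p\<in>F. x p = 0" if F: "finite F" "F \<subseteq> L" and xC: "\<forall>p\<in>F. x p \<in> C p" and s0: "sum x F = 0" for F x
  proof (rule ccontr)
    assume "\<not> (\<forall>p\<in>F. x p = 0)"
    then have Gne: "{p \<in> F. x p \<noteq> 0} \<noteq> {}" by blast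
    define p0 where "p0 = Min {p \<in> F. x p \<noteq> 0}"
    have fG: "finite {p \<in> F. x p \<noteq> 0}" using F by simp
    have p0G: "p0 \<in> F" "x p0 \<noteq> 0" using Min_in[OF fG Gne] unfolding p0_def by auto
    have p0n: "p0 < n" using p0G F unfolding L_def by auto
    have rest: "sum x (F - {p0}) \<in> I (Suc p0)"
    proof (rule subspace_sum[OF Isub])
      show "Suc p0 \<le> n" using p0n by simp
      fix q assume q: "q \<in> F - {p0}"
      show "x q \<in> I (Suc p0)"
      proof (cases "x q = 0")
        case True then show ?thesis using subspace_0[OF Isub[of "Suc p0"]] p0n by simp
      next
        case False
        then have "p0 \<le> q" unfolding p0_def using q fG by (intro Min_le) auto
        then have "Suc p0 \<le> q" using q by auto
        moreover have qn: "q < n" using q F unfolding L_def by auto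
        ultimately have "I q \<subseteq> I (Suc p0)" using mono by simp
        moreover have "x q \<in> I q" using xC q C_I[OF qn] by blast
        ultimately show ?thesis by blast
      qed
    qed
    have "sum x F = x p0 + sum x (F - {p0})" using p0G(1) F(1) by (simp add: sum.remove)
    then have "x p0 = - sum x (F - {p0})" using s0 by (simp add: eq_neg_iff_add_eq_0)
    then have "x p0 \<in> I (Suc p0)" using subspace_neg[OF Isub rest] p0n by simp
    moreover have "x p0 \<in> C p0" using xC p0G by blast
    ultimately have "x p0 \<in> C p0 \<inter> ideal_gt scale L (\<le>) I p0" using gt[OF p0n] by simp
    then show False using C_int[OF p0n] p0G(2) by blast
  qed
  have quots: "\<exists>W actL W' actR beta. left_module scale W actL \<and> right_module scale W' actR \<and>
        quotient_iso_tensor scale (I p) (ideal_gt scale L (\<le>) I p) W actL W' actR beta" if p: "p < n" for p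
  proof -
    have "aideal (I (Suc p))" "aideal (I p)" using Iid p by auto
    moreover have "I (Suc p) \<subset> I p" using Istep p by blast
    moreover have "\<And>X. aideal X \<Longrightarrow> I (Suc p) \<subseteq> X \<Longrightarrow> X \<subseteq> I p \<Longrightarrow> X = I (Suc p) \<or> X = I p"
      using Istep p by blast
    ultimately show ?thesis using quot_exists[of "I (Suc p)" "I p"] gt[OF p] by simp
  qed
  have "standardly_based scale L (\<le>) I"
    unfolding standardly_based_def
  proof (intro conjI)
    show "poset_on L (\<le>)" by (auto simp: poset_on_def)
    show "\<forall>p\<in>L. alg_ideal scale (I p)" using Iid by (auto simp: L_def alg_ideal_def aideal_def)
    show "\<forall>p\<in>L. \<forall>q\<in>L. p \<le> q \<and> p \<noteq> q \<longrightarrow> I q \<subseteq> I p" using mono by (auto simp: L_def)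
    show "\<exists>C. (\<forall>p\<in>L. subspace (C p) \<and> I p = {u + v |u v. u \<in> C p \<and> v \<in> ideal_gt scale L (\<le>) I p} \<and>
              C p \<inter> ideal_gt scale L (\<le>) I p = {0}) \<and>
          span (\<Union> (C ` L)) = UNIV \<and>
          (\<forall>F x. finite F \<longrightarrow> F \<subseteq> L \<longrightarrow> (\<forall>p\<in>F. x p \<in> C p) \<longrightarrow> sum x F = 0 \<longrightarrow> (\<forall>p\<in>F. x p = 0))"
      using C_sub C_dec C_int span_all indep by (intro exI[of _ C]) (auto simp: L_def)
    show "\<forall>p\<in>L. \<exists>W actL W' actR beta. left_module scale W actL \<and> right_module scale W' actR \<and>
        quotient_iso_tensor scale (I p) (ideal_gt scale L (\<le>) I p) W actL W' actR beta"
      using quots by (auto simp: L_def)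
  qed
  then show ?thesis by blast
qed

end

theorem theorem6p4:
  fixes scale :: "'k::alg_closed_field \<Rightarrow> 'a::ring_1 \<Rightarrow> 'a"
  assumes "fd_algebra scale"
  shows "\<exists>(L :: nat set) le I. standardly_based scale L le I"
proof -
  have vs: "vector_space scale"
    and ml: "\<And>c x y. scale c (x * y) = scale c x * y" and mr: "\<And>c x y. scale c (x * y) = x * scale c y"
    and ex: "\<exists>B. finite B \<and> module.span scale B = UNIV"
    using assms unfolding fd_algebra_def by blast+
  interpret V: vector_space scale by (rule vs)
  obtain B0 where B0: "finite B0" "V.span B0 = UNIV" using ex by blast
  obtain B where B: "B \<subseteq> UNIV" "V.independent B" "UNIV \<subseteq> V.span B"
    by (rule V.basis_exists)
  have fB: "finite B" using V.independent_span_bound[OF B0(1) B(2)] B0(2) by simp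
  have spB: "V.span B = UNIV" using B(3) by blast
  have fd: "finite_dimensional_vector_space scale B"
    by (rule finite_dimensional_vector_space.intro[OF vs])
      (rule finite_dimensional_vector_space_axioms.intro[OF fB B(2) spB])
  have "fdalg scale B"
    by (rule fdalg.intro[OF fd]) (rule fdalg_axioms.intro[OF ml mr])
  then show ?thesis by (rule fdalg.main)
qed

end
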